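(* Let $n\ge1$, let $(H_k)_{k=0}^{n-1}$ and $(G_j)_{j=0}^{n-1}$ be two indexed families of $n\times n$ Hadamard matrices, and let $\mathcal P$ and $\mathcal Q$ be left orthogonal Latin squares of order $n$. Then the bases $B(\mathcal P,(H_k))$ and $B(\mathcal Q,(G_j))$ of $\mathbb C^n\otimes\mathbb C^n$ are mutually unbiased: $|\langle a|b\rangle|^2=\frac1{n^2}$ for every state $\ket a$ of the first and every state $\ket b$ of the second.
   Context: $\{\ket k\}_{k=0}^{n-1}$ is the computational basis of $\mathbb C^n$. A quantum Latin square (QLS) of order $n$ is an $n\times n$ array of vectors of $\mathbb C^n$ in which every row and column is an orthonormal basis; the entry in column $i$, row $j$ of $\mathcal Q$ is $\ket{Q_{ij}}$. A Latin square is a QLS all of whose entries are computational basis states; identify it with labels $L_{ij}\in\{0,\dots,n-1\}$. Two Latin squares $A,B$ are orthogonal if the pairs $(A_{ij},B_{ij})$ over all positions give all $n^2$ pairs of labels. The left conjugate $L'$ of a Latin square $L$ is defined by $L'_{ik}=j$ iff $L_{ij}=k$; two Latin squares are left orthogonal if their left conjugates are orthogonal. A Hadamard matrix of order $n$ is an $n\times n$ complex matrix $H$ with $|H_{ij}|=1$ and $HH^\dagger=H^\dagger H=nI_n$. Given a QLS $\mathcal Q$ and Hadamards $(H_j)_{j=0}^{n-1}$, $B(\mathcal Q,(H_j))$ is the orthonormal basis of $\mathbb C^n\otimes\mathbb C^n$ consisting of $A_{ij}=\frac1{\sqrt n}\sum_{k}\ket k\otimes\ket{Q_{kj}}\bra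 kH_j\ket i$, $i,j\in\{0,\dots,n-1\}$. *)

theory Defs
  imports Complex_Main
begin

text \<open>A vector of C^n is a function nat => complex (only entries < n matter);
  a vector of C^n (x) C^n is a function nat * nat => complex, with
  coordinate (a,b) the coefficient of ket a (x) ket b.
  A square array is indexed as Q i j = entry in column i, row j.\<close>

definition ket :: "nat \<Rightarrow> nat \<Rightarrow> complex" where
  "ket k = (\<lambda>x. if x = k then 1 else 0)"

definition tensor :: "(nat \<Rightarrow> complex) \<Rightarrow> (nat \<Rightarrow> complex) \<Rightarrow> (nat \<times> nat \<Rightarrow> complex)" where
  "tensor u v = (\<lambda>(a, b). u a * v b)"

definition inner2 :: "nat \<Rightarrow> (nat \<times> nat \<Rightarrow> complex) \<Rightarrow> (nat \<times> nat \<Rightarrow> complex) \<Rightarrow> complex" where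
  "inner2 n u v = (\<Sum>p\<in>{..<n} \<times> {..<n}. cnj (u p) * v p)"

definition latin_square :: "nat \<Rightarrow> (nat \<Rightarrow> nat \<Rightarrow> nat) \<Rightarrow> bool" where
  "latin_square n L \<longleftrightarrow>
     (\<forall>j<n. bij_betw (\<lambda>i. L i j) {..<n} {..<n}) \<and>
     (\<forall>i<n. bij_betw (\<lambda>j. L i j) {..<n} {..<n})"

definition left_conjugate :: "nat \<Rightarrow> (nat \<Rightarrow> nat \<Rightarrow> nat) \<Rightarrow> nat \<Rightarrow> nat \<Rightarrow> nat" where
  "left_conjugate n L i k = (THE j. j < n \<and> L i j = k)"

definition orthogonal_latin :: "nat \<Rightarrow> (nat \<Rightarrow> nat \<Rightarrow> nat) \<Rightarrow> (nat \<Rightarrow> nat \<Rightarrow> nat) \<Rightarrow> bool" where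
  "orthogonal_latin n A B \<longleftrightarrow>
     bij_betw (\<lambda>(i, j). (A i j, B i j)) ({..<n} \<times> {..<n}) ({..<n} \<times> {..<n})"

definition left_orthogonal :: "nat \<Rightarrow> (nat \<Rightarrow> nat \<Rightarrow> nat) \<Rightarrow> (nat \<Rightarrow> nat \<Rightarrow> nat) \<Rightarrow> bool" where
  "left_orthogonal n A B \<longleftrightarrow> orthogonal_latin n (left_conjugate n A) (left_conjugate n B)"

definition hadamard :: "nat \<Rightarrow> (nat \<Rightarrow> nat \<Rightarrow> complex) \<Rightarrow> bool" where
  "hadamard n H \<longleftrightarrow>
     (\<forall>i<n. \<forall>j<n. cmod (H i j) = 1) \<and>
     (\<forall>i<n. \<forall>j<n. (\<Sum>k<n. H i k * cnj (H j k)) = (if i = j then of_nat n else 0)) \<and>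
     (\<forall>i<n. \<forall>j<n. (\<Sum>k<n. cnj (H k i) * H k j) = (if i = j then of_nat n else 0))"

definition latin_qls :: "(nat \<Rightarrow> nat \<Rightarrow> nat) \<Rightarrow> nat \<Rightarrow> nat \<Rightarrow> (nat \<Rightarrow> complex)" where
  "latin_qls L = (\<lambda>i j. ket (L i j))"

definition qls_basis :: "nat \<Rightarrow> (nat \<Rightarrow> nat \<Rightarrow> (nat \<Rightarrow> complex)) \<Rightarrow> (nat \<Rightarrow> nat \<Rightarrow> nat \<Rightarrow> complex)
    \<Rightarrow> nat \<Rightarrow> nat \<Rightarrow> (nat \<times> nat \<Rightarrow> complex)" where
  "qls_basis n Q H i j = (\<lambda>p. complex_of_real (1 / sqrt (real n)) *
       (\<Sum>k<n. tensor (ket k) (Q k j) p * H j k i))"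

end

theory Submission
  imports Defs
begin

lemma basis_eval:
  assumes "a < n"
  shows "qls_basis n (latin_qls P) H i j (a,b) =
     complex_of_real (1 / sqrt (real n)) * (if b = P a j then H j a i else 0)"
proof -
  have "(\<Sum>k<n. tensor (ket k) (latin_qls P k j) (a,b) * H j k i)
       = (\<Sum>k<n. if k = a then (if b = P a j then H j a i else 0) else 0)"
    by (rule sum.cong) (auto simp: tensor_def ket_def latin_qls_def)
  also have "\<dots> = (if b = P a j then H j a i else 0)" using assms by simp
  finally show ?thesis by (simp add: qls_basis_def)
qed

lemma ls_range: "latin_square n P \<Longrightarrow> a < n \<Longrightarrow> j < n \<Longrightarrow> P a j < n"
  unfolding latin_square_def bij_betw_def by auto

lemma lc_eq:
  assumes "latin_square n P" "a < n" "j < n"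
  shows "left_conjugate n P a (P a j) = j"
proof -
  have inj: "inj_on (\<lambda>j. P a j) {..<n}" using assms unfolding latin_square_def bij_betw_def by auto
  show ?thesis unfolding left_conjugate_def
    by (rule the_equality) (use assms inj in \<open>auto simp: inj_on_def\<close>)
qed

lemma lc_ex:
  assumes "latin_square n P" "a < n" "k < n"
  shows "left_conjugate n P a k < n \<and> P a (left_conjugate n P a k) = k"
proof -
  have "k \<in> (\<lambda>j. P a j) ` {..<n}" using assms unfolding latin_square_def bij_betw_def by auto
  then obtain j where j: "j < n" "P a j = k" by auto
  then show ?thesis using lc_eq[OF assms(1,2) j(1)] by auto
qed

lemma unique_a:
  assumes P: "latin_square n P" and Q: "latin_square n Q" and O: "left_orthogonal n P Q"
    and j: "j < n" and j': "j' < n"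
  shows "\<exists>a0<n. \<forall>a<n. (P a j = Q a j') \<longleftrightarrow> a = a0"
proof -
  let ?f = "\<lambda>(i, k). (left_conjugate n P i k, left_conjugate n Q i k)"
  have b: "bij_betw ?f ({..<n} \<times> {..<n}) ({..<n} \<times> {..<n})"
    using O unfolding left_orthogonal_def orthogonal_latin_def by simp
  have "(j, j') \<in> ?f ` ({..<n} \<times> {..<n})" using b j j' unfolding bij_betw_def by auto
  then obtain a0 k where ak: "a0 < n" "k < n" "left_conjugate n P a0 k = j" "left_conjugate n Q a0 k = j'"
    by auto
  have e: "P a0 j = Q a0 j'" using lc_ex[OF P ak(1,2)] lc_ex[OF Q ak(1,2)] ak by auto
  have "\<forall>a<n. (P a j = Q a j') \<longleftrightarrow> a = a0"
  proof (intro allI impI iffI)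
    fix a assume a: "a < n" "P a j = Q a j'"
    have f1: "?f (a, P a j) = (j, j')" using lc_eq[OF P a(1) j] lc_eq[OF Q a(1) j'] a by simp
    have f2: "?f (a0, P a0 j) = (j, j')" using lc_eq[OF P ak(1) j] lc_eq[OF Q ak(1) j'] e by simp
    have m1: "(a, P a j) \<in> {..<n} \<times> {..<n}" using a(1) ls_range[OF P a(1) j] by simp
    have m2: "(a0, P a0 j) \<in> {..<n} \<times> {..<n}" using ak(1) ls_range[OF P ak(1) j] by simp
    have inj: "inj_on ?f ({..<n} \<times> {..<n})" using b by (simp add: bij_betw_def)
    have "(a, P a j) = (a0, P a0 j)" by (rule inj_onD[OF inj _ m1 m2]) (simp only: f1 f2)
    then show "a = a0" by simp
  next
    fix a assume "a < n" "a = a0" then show "P a j = Q a j'" using e by simp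
  qed
  then show ?thesis using ak(1) by blast
qed

theorem corollary27:
  fixes n :: nat
    and H G :: "nat \<Rightarrow> nat \<Rightarrow> nat \<Rightarrow> complex"
    and P Q :: "nat \<Rightarrow> nat \<Rightarrow> nat"
  assumes "n \<ge> 1"
    and "\<forall>k<n. hadamard n (H k)"
    and "\<forall>j<n. hadamard n (G j)"
    and "latin_square n P" and "latin_square n Q"
    and "left_orthogonal n P Q"
  shows "\<forall>i<n. \<forall>j<n. \<forall>i'<n. \<forall>j'<n.
           (cmod (inner2 n (qls_basis n (latin_qls P) H i j) (qls_basis n (latin_qls Q) G i' j')))\<^sup>2
             = 1 / (real n)\<^sup>2"
proof (intro allI impI)
  fix i j i' j' assume i: "i < n" and j: "j < n" and i': "i' < n" and j': "j' < n"
  define c where "c = complex_of_real (1 / sqrt (real n))"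
  obtain a0 where a0: "a0 < n" "\<forall>a<n. (P a j = Q a j') \<longleftrightarrow> a = a0"
    using unique_a[OF assms(4,5,6) j j'] by blast
  have "inner2 n (qls_basis n (latin_qls P) H i j) (qls_basis n (latin_qls Q) G i' j')
      = (\<Sum>a<n. \<Sum>b<n. cnj (qls_basis n (latin_qls P) H i j (a,b)) * qls_basis n (latin_qls Q) G i' j' (a,b))"
    unfolding inner2_def by (simp add: sum.cartesian_product)
  also have "\<dots> = (\<Sum>a<n. if a = a0 then c * c * (cnj (H j a i) * G j' a i') else 0)"
  proof (rule sum.cong[OF refl])
    fix a assume a: "a \<in> {..<n}"
    have cc: "cnj c = c" by (simp add: c_def)
    have "(\<Sum>b<n. cnj (qls_basis n (latin_qls P) H i j (a,b)) * qls_basis n (latin_qls Q) G i' j' (a,b))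
        = (\<Sum>b<n. if b = P a j then (if P a j = Q a j' then c * c * (cnj (H j a i) * G j' a i') else 0) else 0)"
    proof (rule sum.cong[OF refl])
      fix b
      have an: "a < n" using a by simp
      show "cnj (qls_basis n (latin_qls P) H i j (a,b)) * qls_basis n (latin_qls Q) G i' j' (a,b)
        = (if b = P a j then (if P a j = Q a j' then c * c * (cnj (H j a i) * G j' a i') else 0) else 0)"
        unfolding basis_eval[OF an] c_def[symmetric]
        by (simp add: cc)
    qed
    also have "\<dots> = (if P a j = Q a j' then c * c * (cnj (H j a i) * G j' a i') else 0)"
      using ls_range[OF assms(4)] a j by simp
    also have "\<dots> = (if a = a0 then c * c * (cnj (H j a i) * G j' a i') else 0)"
      using a0 a by simp
    finally show "(\<Sum>b<n. cnj (qls_basis n (latin_qls P) H i j (a,b)) * qls_basis n (latin_qls Q) G i' j' (a,b))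
        = (if a = a0 then c * c * (cnj (H j a i) * G j' a i') else 0)" .
  qed
  also have "\<dots> = c * c * (cnj (H j a0 i) * G j' a0 i')" using a0 by simp
  finally have eq: "inner2 n (qls_basis n (latin_qls P) H i j) (qls_basis n (latin_qls Q) G i' j')
     = c * c * (cnj (H j a0 i) * G j' a0 i')" .
  have h: "cmod (H j a0 i) = 1" using assms(2) j a0 i unfolding hadamard_def by auto
  have g: "cmod (G j' a0 i') = 1" using assms(3) j' a0 i' unfolding hadamard_def by auto
  have "cmod (c * c) = 1 / real n"
  proof -
    have "c * c = complex_of_real (1 / sqrt (real n) * (1 / sqrt (real n)))" unfolding c_def of_real_mult ..
    also have "1 / sqrt (real n) * (1 / sqrt (real n)) = 1 / real n"
      using assms(1) by (simp add: real_sqrt_mult[symmetric])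
    finally show ?thesis by (simp only: norm_of_real) simp
  qed
  then have "cmod (c * c * (cnj (H j a0 i) * G j' a0 i')) = 1 / real n"
    by (simp add: norm_mult h g)
  then show "(cmod (inner2 n (qls_basis n (latin_qls P) H i j) (qls_basis n (latin_qls Q) G i' j')))\<^sup>2
             = 1 / (real n)\<^sup>2" by (simp add: eq power_divide)
qed

end
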